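(* Fix $L\ge1$, rates $a_1,\ldots,a_L>0$, $\alpha,\beta>0$ with $\alpha a_i<1$ for all $i$, an $L$-particle configuration $\vec{\mathsf{x}}$, and $m\in\{1,\ldots,L\}$. With $\vec{\mathsf{y}}$, $\vec{\mathsf{x}}'$, $\mathsf{y}^{\dagger}_m$ and $\vec{\mathsf{y}}^{\,BG}$ constructed as described in the context, conditionally on $\vec{\mathsf{x}}$ the joint distribution of $(\mathsf{y}_{m-1},\mathsf{y}^{\dagger}_m)$ is the same as the joint distribution of $(\mathsf{y}_{m-1},\mathsf{y}^{BG}_m)$.
   Context: Fix $q\in(0,1)$; $(z;q)_k=\prod_{i=0}^{k-1}(1-zq^i)$. For $\gamma\in(0,1)$ and $m\in\mathbb{Z}_{\ge0}$ let $\mathbf{p}_{m,\gamma}(j)=\gamma^j(\gamma;q)_{m-j}\frac{(q;q)_m}{(q;q)_j(q;q)_{m-j}}$, $0\le j\le m$, and $\mathbf{p}_{+\infty,\gamma}(j)=\gamma^j(\gamma;q)_\infty/(q;q)_j$, $j\ge0$ (probability distributions). Configurations: $\vec{\mathsf{x}}=(\mathsf{x}_1>\ldots>\mathsf{x}_L)$ in $\mathbb{Z}$, with the convention $\mathsf{x}_0=+\infty$. Geometric $q$-TASEP move $\mathbf{G}_\alpha$ (rates $a_i$): each particle $i$ independently jumps to the right by $j$ with probability $\mathbf{p}_{\mathsf{x}_{i-1}-\mathsf{x}_i-1,\,a_i\alpha}(j)$. Bernoulli $q$-TASEP move $\mathbf{B}_\beta$: sequentially for $i=1,\ldots,L$,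 particle $i$ jumps right by one with probability $a_i\beta/(1+a_i\beta)$ if $i=1$ or if particle $i-1$ has jumped in this move, and with probability $(1-q^{\mathsf{x}_{i-1}-\mathsf{x}_i-1})a_i\beta/(1+a_i\beta)$ otherwise (gaps measured before the move); else it stays. Vertex weights $\mathsf{L}_{u,a,\nu}(i_1,j_1;i_2,j_2)$, $i_1,i_2\in\mathbb{Z}_{\ge0}$, $j_1,j_2\in\{0,1\}$, vanish unless $i_1+j_1=i_2+j_2$, and for $g\in\mathbb{Z}_{\ge0}$: $\mathsf{L}(g,0;g,0)=\frac{1-auq^g}{1-au}$, $\mathsf{L}(g,0;g-1,1)=\frac{-au(1-q^g)}{1-au}$, $\mathsf{L}(g,1;g,1)=\frac{\nu q^g-au}{1-au}$, $\mathsf{L}(g,1;g+1,0)=\frac{1-\nu q^g}{1-au}$. Construction: given $\vec{\mathsf{x}}$, let $\vec{\mathsf{y}}$ be obtained by applying $\mathbf{B}_\beta$ and $\vec{\mathsf{x}}'$ by applying $\mathbf{G}_\alpha$, with independent randomness. Given $\mathsf{x}_{m-1},\mathsf{y}_{m-1},\mathsf{x}'_m$, set $i_1=\mathsf{x}_{m-1}-\mathsf{x}'_m-1$, $j_1=\mathsf{y}_{m-1}-\mathsf{x}_{m-1}$, sample $j_2\in\{0,1\}$ with probability $\mathsf{L}_{-\beta,a_m,\alpha a_m}(i_1,j_1;i_1+j_1-j_2,j_2)$, and set $\mathsf{y}^\dagger_m:=\mathsf{x}'_m+j_2$. For $m=1$, $\mathsf{x}_0=\mathsf{y}_0=+\infty$,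 $i_1=+\infty$ (with $q^{i_1}=0$), and $j_1$ may be taken $0$ or $1$ (the weights do not depend on this choice). Finally $\vec{\mathsf{y}}^{\,BG}$ is obtained from $\vec{\mathsf{y}}$ by applying a further geometric move $\mathbf{G}_\alpha$ with randomness independent of everything above. *)

theory Defs
  imports "HOL-Probability.Probability"
begin

definition qpoch :: "real \<Rightarrow> real \<Rightarrow> nat \<Rightarrow> real" where
  "qpoch z q k = (\<Prod>i<k. (1 - z * q ^ i))"

definition qpoch_inf :: "real \<Rightarrow> real \<Rightarrow> real" where
  "qpoch_inf z q = (\<Prod>i. (1 - z * q ^ i))"

definition qpow :: "real \<Rightarrow> enat \<Rightarrow> real" where
  "qpow q g = (case g of enat n \<Rightarrow> q ^ n | \<infinity> \<Rightarrow> 0)"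

definition pgeo_fin :: "real \<Rightarrow> nat \<Rightarrow> real \<Rightarrow> nat \<Rightarrow> real" where
  "pgeo_fin q m \<gamma> j =
     (if j \<le> m then \<gamma> ^ j * qpoch \<gamma> q (m - j) * (qpoch q q m / (qpoch q q j * qpoch q q (m - j)))
      else 0)"

definition pgeo_inf :: "real \<Rightarrow> real \<Rightarrow> nat \<Rightarrow> real" where
  "pgeo_inf q \<gamma> j = \<gamma> ^ j * qpoch_inf \<gamma> q / qpoch q q j"

definition geo_pmf :: "real \<Rightarrow> enat \<Rightarrow> real \<Rightarrow> nat pmf" where
  "geo_pmf q g \<gamma> = embed_pmf (\<lambda>j. case g of enat m \<Rightarrow> pgeo_fin q m \<gamma> j | \<infinity> \<Rightarrow> pgeo_inf q \<gamma> j)"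

text \<open>A configuration x_1 > ... > x_L is a strictly decreasing int list xs with x_k = xs ! (k-1).
  The extended position returns None for k = 0 (convention x_0 = +infinity).\<close>
definition pos :: "int list \<Rightarrow> nat \<Rightarrow> int" where
  "pos xs k = xs ! (k - 1)"

definition epos :: "int list \<Rightarrow> nat \<Rightarrow> int option" where
  "epos xs k = (if k = 0 then None else Some (xs ! (k - 1)))"

definition config :: "nat \<Rightarrow> int list \<Rightarrow> bool" where
  "config L xs \<longleftrightarrow> length xs = L \<and> sorted_wrt (>) xs"

definition gap :: "int option \<Rightarrow> int \<Rightarrow> enat" where
  "gap prev x = (case prev of None \<Rightarrow> \<infinity> | Some y \<Rightarrow> enat (nat (y - x - 1)))"

text \<open>Jumps of particles k, k+1, ...; each is independent, with law p_{gap, a_k alpha},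
  gaps measured in the configuration before the move.\<close>
fun Gjumps :: "real \<Rightarrow> (nat \<Rightarrow> real) \<Rightarrow> real \<Rightarrow> nat \<Rightarrow> int option \<Rightarrow> int list \<Rightarrow> nat list pmf" where
  "Gjumps q a \<alpha> k prev [] = return_pmf []"
| "Gjumps q a \<alpha> k prev (x # xs) =
     do { j \<leftarrow> geo_pmf q (gap prev x) (a k * \<alpha>);
          js \<leftarrow> Gjumps q a \<alpha> (Suc k) (Some x) xs;
          return_pmf (j # js) }"

definition Gmove :: "real \<Rightarrow> (nat \<Rightarrow> real) \<Rightarrow> real \<Rightarrow> int list \<Rightarrow> int list pmf" where
  "Gmove q a \<alpha> xs = map_pmf (\<lambda>js. map2 (\<lambda>x j. x + int j) xs js) (Gjumps q a \<alpha> 1 None xs)"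

text \<open>Sequential update; the flag records whether the previous particle jumped in this move.\<close>
fun Bjumps :: "real \<Rightarrow> (nat \<Rightarrow> real) \<Rightarrow> real \<Rightarrow> nat \<Rightarrow> int option \<Rightarrow> bool \<Rightarrow> int list \<Rightarrow> bool list pmf" where
  "Bjumps q a \<beta> k prev pj [] = return_pmf []"
| "Bjumps q a \<beta> k prev pj (x # xs) =
     do { b \<leftarrow> bernoulli_pmf
                 ((case prev of None \<Rightarrow> 1
                    | Some y \<Rightarrow> (if pj then 1 else 1 - q ^ nat (y - x - 1)))
                  * (a k * \<beta> / (1 + a k * \<beta>)));
          bs \<leftarrow> Bjumps q a \<beta> (Suc k) (Some x) b xs;
          return_pmf (b # bs) }"

definition Bmove :: "real \<Rightarrow> (nat \<Rightarrow> real) \<Rightarrow> real \<Rightarrow> int list \<Rightarrow> int list pmf" where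
  "Bmove q a \<beta> xs =
     map_pmf (\<lambda>bs. map2 (\<lambda>x b. x + (if b then 1 else 0)) xs bs) (Bjumps q a \<beta> 1 None False xs)"

text \<open>Horizontal labels i1, i2 in Z_{>=0} or +infinity (q^{+infinity} = 0); vertical labels j1, j2 in {0,1}.\<close>
definition Lweight :: "real \<Rightarrow> real \<Rightarrow> real \<Rightarrow> real \<Rightarrow> enat \<Rightarrow> nat \<Rightarrow> enat \<Rightarrow> nat \<Rightarrow> real" where
  "Lweight q u a \<nu> i1 j1 i2 j2 =
     (if i1 + enat j1 \<noteq> i2 + enat j2 then 0
      else if j1 = 0 \<and> j2 = 0 then (1 - a * u * qpow q i1) / (1 - a * u)
      else if j1 = 0 \<and> j2 = 1 then - a * u * (1 - qpow q i1) / (1 - a * u)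
      else if j1 = 1 \<and> j2 = 1 then (\<nu> * qpow q i1 - a * u) / (1 - a * u)
      else if j1 = 1 \<and> j2 = 0 then (1 - \<nu> * qpow q i1) / (1 - a * u)
      else 0)"

text \<open>Joint law of (y_{m-1}, y^dagger_m) given x (y_0 = +infinity is represented by None).\<close>
definition dagger_pair :: "real \<Rightarrow> (nat \<Rightarrow> real) \<Rightarrow> real \<Rightarrow> real \<Rightarrow> int list \<Rightarrow> nat
    \<Rightarrow> (int option \<times> int) pmf" where
  "dagger_pair q a \<alpha> \<beta> xs m =
     do { ys \<leftarrow> Bmove q a \<beta> xs;
          xs' \<leftarrow> Gmove q a \<alpha> xs;
          let i1 = gap (epos xs (m - 1)) (pos xs' m);
          let j1 = (case (epos ys (m - 1), epos xs (m - 1)) of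
                      (Some y, Some x) \<Rightarrow> nat (y - x) | _ \<Rightarrow> 0);
          b \<leftarrow> bernoulli_pmf (Lweight q (- \<beta>) (a m) (\<alpha> * a m) i1 j1 (i1 + enat j1 - enat 1) 1);
          return_pmf (epos ys (m - 1), pos xs' m + (if b then 1 else 0)) }"

definition BG_pair :: "real \<Rightarrow> (nat \<Rightarrow> real) \<Rightarrow> real \<Rightarrow> real \<Rightarrow> int list \<Rightarrow> nat
    \<Rightarrow> (int option \<times> int) pmf" where
  "BG_pair q a \<alpha> \<beta> xs m =
     do { ys \<leftarrow> Bmove q a \<beta> xs;
          ysBG \<leftarrow> Gmove q a \<alpha> ys;
          return_pmf (epos ys (m - 1), pos ysBG m) }"

end

theory Submission
  imports Defs
begin


lemma qpoch_Suc: "qpoch z q (Suc n) = qpoch z q n * (1 - z * q^n)"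
  by (simp add: qpoch_def)

lemma qpoch_0[simp]: "qpoch z q 0 = 1"
  by (simp add: qpoch_def)

lemma qpoch_pos: assumes "0 \<le> z" "z < 1" "0 < q" "q < 1" shows "0 < qpoch z q n"
proof (induction n)
  case 0 then show ?case by simp
next
  case (Suc n)
  have "q^n \<le> 1" using assms by (simp add: power_le_one)
  then have "z * q^n < 1" using assms
    by (metis le_less_trans mult_left_le mult.commute mult_le_cancel_left1 less_le_not_le linorder_not_less) 
  then show ?case using Suc by (simp add: qpoch_Suc)
qed

lemma A_core:
  assumes q: "0 < q" "q < 1" and g: "0 \<le> \<gamma>" "\<gamma> < 1"
  shows "pgeo_fin q (Suc (Suc j + r)) \<gamma> (Suc j) =
     pgeo_fin q (Suc j + r) \<gamma> (Suc j) * (1 - \<gamma> * q^r) + pgeo_fin q (Suc j + r) \<gamma> j * \<gamma> * q^(Suc r)"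
proof -
  have d1: "Suc (Suc j + r) - Suc j = Suc r" "Suc j + r - Suc j = r" "Suc j + r - j = Suc r" by auto
  have p1: "0 < qpoch q q n" for n using qpoch_pos[of q q n] q by simp
  have p2: "0 < qpoch \<gamma> q n" for n using qpoch_pos[of \<gamma> q n] q g by simp
  have ne: "1 - q * q^n \<noteq> 0" for n
  proof -
    have "q * q^n < 1" using q by (metis power_Suc power_less_one_iff zero_less_Suc less_le_not_le  power_strict_decreasing_iff q(1) q(2)) 
    then show ?thesis by simp
  qed
  define AA where "AA = qpoch \<gamma> q r"
  define BB where "BB = qpoch q q (Suc (j + r))"
  define Cq where "Cq = qpoch q q j"
  define Dq where "Dq = qpoch q q r"
  define uu where "uu = 1 - q * q^j"
  define vv where "vv = 1 - q * q^r"
  define TT where "TT = 1 - \<gamma> * q^r"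
  have n1: "uu \<noteq> 0" "vv \<noteq> 0" using ne unfolding uu_def vv_def by auto
  have n2: "Cq \<noteq> 0" "Dq \<noteq> 0" unfolding Cq_def Dq_def using p1[of j] p1[of r] by linarith+
  have L: "pgeo_fin q (Suc (Suc j + r)) \<gamma> (Suc j) = \<gamma>^(Suc j) * (AA*TT) * (BB*(1-(1-uu)*(1-vv)) / (Cq*uu*(Dq * vv)))"
    unfolding pgeo_fin_def d1 AA_def BB_def Cq_def Dq_def uu_def vv_def TT_def
    by (simp add: qpoch_Suc power_add algebra_simps)
  have R1: "pgeo_fin q (Suc j + r) \<gamma> (Suc j) = \<gamma>^(Suc j) * AA * (BB / (Cq*uu*Dq))"
    unfolding pgeo_fin_def d1 AA_def BB_def Cq_def Dq_def uu_def vv_def TT_def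
    by (simp add: qpoch_Suc power_add algebra_simps)
  have R2: "pgeo_fin q (Suc j + r) \<gamma> j = \<gamma>^j * (AA*TT) * (BB / (Cq*(Dq * vv)))"
    unfolding pgeo_fin_def d1 AA_def BB_def Cq_def Dq_def uu_def vv_def TT_def
    by (simp add: qpoch_Suc power_add algebra_simps)
  have qr: "q^(Suc r) = 1 - vv" "1 - \<gamma> * q^r = TT" unfolding vv_def TT_def by simp_all
  show ?thesis
    unfolding L R1 R2 qr
    using n1 n2
    by (simp add: field_simps)
qed

lemma B_core:
  assumes q: "0 < q" "q < 1" and g: "0 \<le> \<gamma>" "\<gamma> < 1"
  shows "q^(Suc j + r) * pgeo_fin q (Suc j + r) \<gamma> (Suc j) + (1 - q^(Suc j + r)) * pgeo_fin q (j + r) \<gamma> j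
     = q^r * pgeo_fin q (Suc j + r) \<gamma> (Suc j) + (1 - q^(Suc r)) * pgeo_fin q (Suc j + r) \<gamma> j"
proof -
  have d1: "Suc j + r - Suc j = r" "Suc j + r - j = Suc r" "j + r - j = r" by auto
  have p1: "0 < qpoch q q n" for n using qpoch_pos[of q q n] q by simp
  have ne: "1 - q * q^n \<noteq> 0" for n
  proof -
    have "q * q^n < 1" using q by (metis power_Suc power_less_one_iff zero_less_Suc less_le_not_le  power_strict_decreasing_iff q(1) q(2)) 
    then show ?thesis by simp
  qed
  define AA where "AA = qpoch \<gamma> q r"
  define B0 where "B0 = qpoch q q (j + r)"
  define Cq where "Cq = qpoch q q j"
  define Dq where "Dq = qpoch q q r"
  define s where "s = q^j"
  define t where "t = q^r"
  define TT where "TT = 1 - \<gamma> * q^r"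
  have n1: "1 - q * s \<noteq> 0" "1 - q * t \<noteq> 0" using ne unfolding s_def t_def by auto
  have n2: "Cq \<noteq> 0" "Dq \<noteq> 0" unfolding Cq_def Dq_def using p1[of j] p1[of r] by linarith+
  have R1: "pgeo_fin q (Suc j + r) \<gamma> (Suc j) = \<gamma>^(Suc j) * AA * ((B0 * (1 - q * s * t)) / (Cq * (1 - q * s) * Dq))"
    unfolding pgeo_fin_def d1 AA_def B0_def Cq_def Dq_def s_def t_def
    by (simp add: qpoch_Suc power_add algebra_simps)
  have R2: "pgeo_fin q (Suc j + r) \<gamma> j = \<gamma>^j * (AA * TT) * ((B0 * (1 - q * s * t)) / (Cq * (Dq * (1 - q * t))))"
    unfolding pgeo_fin_def d1 AA_def B0_def Cq_def Dq_def s_def t_def TT_def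
    by (simp add: qpoch_Suc power_add algebra_simps)
  have R3: "pgeo_fin q (j + r) \<gamma> j = \<gamma>^j * AA * (B0 / (Cq * Dq))"
    unfolding pgeo_fin_def d1 AA_def B0_def Cq_def Dq_def s_def t_def TT_def
    by (simp add: qpoch_Suc power_add algebra_simps)
  have qr: "q^r = t" "q^(Suc r) = q * t" "q^(Suc j + r) = q * s * t" "TT = 1 - \<gamma> * t" unfolding s_def t_def TT_def by (simp_all add: power_add)
  define uu where "uu = 1 - q * s"
  define vv where "vv = 1 - q * t"
  have sub: "q * s * t = (1 - uu) * t" "q * t = 1 - vv" "q * s = 1 - uu" unfolding uu_def vv_def by simp_all
  have n3: "uu \<noteq> 0" "vv \<noteq> 0" using n1 unfolding uu_def vv_def by auto
  show ?thesis
    unfolding R1 R2 R3 qr sub uu_def[symmetric] vv_def[symmetric]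
    using n3 n2
    by (simp add: field_simps)
qed

lemma pgeo_fin_0: "0 < q \<Longrightarrow> q < 1 \<Longrightarrow> pgeo_fin q g \<gamma> 0 = qpoch \<gamma> q g"
  using qpoch_pos[of q q g] by (simp add: pgeo_fin_def)

lemma pgeo_fin_top: "0 < q \<Longrightarrow> q < 1 \<Longrightarrow> pgeo_fin q g \<gamma> g = \<gamma>^g"
  using qpoch_pos[of q q g] by (simp add: pgeo_fin_def)

lemma pgeo_fin_gt: "g < k \<Longrightarrow> pgeo_fin q g \<gamma> k = 0"
  by (simp add: pgeo_fin_def)

lemma pgeo_fin_nonneg: assumes "0 < q" "q < 1" "0 \<le> \<gamma>" "\<gamma> < 1" shows "0 \<le> pgeo_fin q g \<gamma> k"
proof -
  have a: "0 < qpoch q q n" "0 < qpoch \<gamma> q n" for n using qpoch_pos[of q q n] qpoch_pos[of \<gamma> q n] assms by auto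
  have "0 \<le> \<gamma>^k * qpoch \<gamma> q (g-k) * (qpoch q q g / (qpoch q q k * qpoch q q (g-k)))"
    using a assms by (intro mult_nonneg_nonneg divide_nonneg_pos mult_pos_pos) (auto intro: less_imp_le)
  then show ?thesis by (simp add: pgeo_fin_def)
qed

lemma A_full:
  assumes q: "0 < q" "q < 1" and g: "0 \<le> \<gamma>" "\<gamma> < 1"
  shows "pgeo_fin q (Suc g) \<gamma> k = pgeo_fin q g \<gamma> k * (1 - \<gamma> * q^(g-k))
     + (if 1 \<le> k then pgeo_fin q g \<gamma> (k-1) * \<gamma> * q^(g - (k-1)) else 0)"
proof (cases k)
  case 0
  then show ?thesis using q by (simp add: pgeo_fin_0 qpoch_Suc)
next
  case (Suc j)
  consider "j < g" | "j = g" | "g < j" by linarith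
  then show ?thesis
  proof cases
    case 1
    define r where "r = g - Suc j"
    have gg: "g = Suc j + r" using 1 r_def by simp
    have "g - k = r" "g - (k-1) = Suc r" using gg Suc by auto
    then show ?thesis using A_core[OF q g, of j r] Suc gg by simp
  next
    case 2
    then show ?thesis using Suc q by (simp add: pgeo_fin_top pgeo_fin_gt)
  next
    case 3
    then show ?thesis using Suc by (simp add: pgeo_fin_gt)
  qed
qed

lemma B_full:
  assumes q: "0 < q" "q < 1" and g: "0 \<le> \<gamma>" "\<gamma> < 1"
  shows "pgeo_fin q g \<gamma> k * q^(g-k) + (if 1 \<le> k then pgeo_fin q g \<gamma> (k-1) * (1 - q^(g-(k-1))) else 0)
     = (if 1 \<le> k then (1 - q^g) * pgeo_fin q (g-1) \<gamma> (k-1) else 0) + q^g * pgeo_fin q g \<gamma> k"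
proof (cases k)
  case 0
  then show ?thesis by simp
next
  case (Suc j)
  consider "j < g" | "j = g" | "g < j" by linarith
  then show ?thesis
  proof cases
    case 1
    define r where "r = g - Suc j"
    have gg: "g = Suc j + r" using 1 r_def by simp
    have "g - k = r" "g - (k-1) = Suc r" "g - 1 = j + r" using gg Suc by auto
    then show ?thesis using B_core[OF q g, of j r] Suc gg by (simp add: algebra_simps)
  next
    case 2
    then show ?thesis using Suc q by (cases g) (simp_all add: pgeo_fin_gt)
  next
    case 3
    then show ?thesis using Suc by (simp add: pgeo_fin_gt)
  qed
qed

lemma pgeo_fin_sum:
  assumes q: "0 < q" "q < 1" and g: "0 \<le> \<gamma>" "\<gamma> < 1"
  shows "(\<Sum>k\<le>n. pgeo_fin q n \<gamma> k) = 1"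
proof (induction n)
  case 0
  then show ?case using q by (simp add: pgeo_fin_top)
next
  case (Suc n)
  have "(\<Sum>k\<le>Suc n. pgeo_fin q (Suc n) \<gamma> k) =
     (\<Sum>k\<le>Suc n. pgeo_fin q n \<gamma> k * (1 - \<gamma> * q^(n-k))) +
     (\<Sum>k\<le>Suc n. (if 1 \<le> k then pgeo_fin q n \<gamma> (k-1) * \<gamma> * q^(n - (k-1)) else 0))"
    by (simp add: A_full[OF q g] sum.distrib)
  also have "(\<Sum>k\<le>Suc n. pgeo_fin q n \<gamma> k * (1 - \<gamma> * q^(n-k))) = (\<Sum>k\<le>n. pgeo_fin q n \<gamma> k * (1 - \<gamma> * q^(n-k)))"
    by (simp add: pgeo_fin_gt)
  also have "(\<Sum>k\<le>Suc n. (if 1 \<le> k then pgeo_fin q n \<gamma> (k-1) * \<gamma> * q^(n - (k-1)) else 0))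
      = (\<Sum>k\<le>n. pgeo_fin q n \<gamma> k * \<gamma> * q^(n - k))"
    by (subst sum.atMost_Suc_shift) simp
  also have "(\<Sum>k\<le>n. pgeo_fin q n \<gamma> k * (1 - \<gamma> * q^(n-k))) + (\<Sum>k\<le>n. pgeo_fin q n \<gamma> k * \<gamma> * q^(n - k))
     = (\<Sum>k\<le>n. pgeo_fin q n \<gamma> k)"
    by (simp add: sum.distrib[symmetric] algebra_simps)
  finally show ?case using Suc by simp
qed

lemma pmf_geo_fin:
  assumes q: "0 < q" "q < 1" and g: "0 \<le> \<gamma>" "\<gamma> < 1"
  shows "pmf (geo_pmf q (enat n) \<gamma>) k = pgeo_fin q n \<gamma> k"
proof -
  have "(\<integral>\<^sup>+x. ennreal (pgeo_fin q n \<gamma> x) \<partial>count_space UNIV) = (\<Sum>x\<le>n. ennreal (pgeo_fin q n \<gamma> x))"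
    by (rule nn_integral_count_space') (auto simp: pgeo_fin_gt)
  also have "\<dots> = 1"
    using pgeo_fin_sum[OF q g, of n] pgeo_fin_nonneg[OF q g]
    by (simp add: sum_ennreal[symmetric])
  finally show ?thesis
    unfolding geo_pmf_def
    using pgeo_fin_nonneg[OF q g]
    by (simp add: pmf_embed_pmf)
qed



lemma pmf_map_Suc: "pmf (map_pmf Suc G) k = (if k = 0 then 0 else pmf G (k - 1))"
proof (cases k)
  case 0
  have "0 \<notin> set_pmf (map_pmf Suc G)" by auto
  then show ?thesis using 0 by (metis pmf_eq_0_set_pmf)
next
  case (Suc j)
  then show ?thesis by (simp add: pmf_map_inj')
qed

lemma pmf_map_bern_step:
  assumes "0 \<le> w" "w \<le> 1"
  shows "pmf (map_pmf (\<lambda>b. J + of_bool b) (bernoulli_pmf w)) (k::nat) =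
    (if k = J then 1 - w else if k = Suc J then w else 0)"
proof -
  have "pmf (map_pmf (\<lambda>b. J + of_bool b) (bernoulli_pmf w)) k = measure (bernoulli_pmf w) ((\<lambda>b. J + of_bool b) -` {k})"
    by (simp add: pmf_map)
  also have "\<dots> = sum (pmf (bernoulli_pmf w)) ((\<lambda>b. J + of_bool b) -` {k})"
    by (rule measure_measure_pmf_finite) simp
  also have "\<dots> = (if k = J then 1 - w else if k = Suc J then w else 0)"
  proof -
    have "(\<lambda>b. J + of_bool b) -` {k} = (if k = J then {False} else if k = Suc J then {True} else {})"
      by (auto split: if_splits simp: of_bool_def)
    then show ?thesis using assms by simp
  qed
  finally show ?thesis .
qed

lemma pmf_bind_step:
  assumes "\<And>J. 0 \<le> w J" "\<And>J. w J \<le> 1"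
  shows "pmf (bind_pmf p (\<lambda>J. map_pmf (\<lambda>b. J + of_bool b) (bernoulli_pmf (w J)))) (k::nat)
     = pmf p k * (1 - w k) + (if 1 \<le> k then pmf p (k-1) * w (k-1) else 0)"
proof -
  have "pmf (bind_pmf p (\<lambda>J. map_pmf (\<lambda>b. J + of_bool b) (bernoulli_pmf (w J)))) k
     = (\<integral>J. (if k = J then 1 - w J else if k = Suc J then w J else 0) \<partial>measure_pmf p)"
    by (simp add: pmf_bind pmf_map_bern_step assms)
  also have "\<dots> = (\<Sum>J\<in>{k, k-1}. pmf p J *\<^sub>R (if k = J then 1 - w J else if k = Suc J then w J else 0))"
    by (rule integral_measure_pmf) (auto split: if_splits)
  also have "\<dots> = pmf p k * (1 - w k) + (if 1 \<le> k then pmf p (k-1) * w (k-1) else 0)"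
    by (cases k) auto
  finally show ?thesis .
qed

lemma pmf_bind_bern:
  assumes "0 \<le> c" "c \<le> 1"
  shows "pmf (bind_pmf (bernoulli_pmf c) h) k = c * pmf (h True) k + (1 - c) * pmf (h False) k"
  using assms by (simp add: pmf_bind mult.commute)


lemma core1:
  assumes q: "0 < q" "q < 1" and g: "0 \<le> \<gamma>" "\<gamma> < 1" and ab: "0 < ab"
  shows "bind_pmf (geo_pmf q (enat g) \<gamma>) (\<lambda>J. map_pmf (\<lambda>b. J + of_bool b) (bernoulli_pmf ((\<gamma>*q^(g-J) + ab)/(1+ab))))
     = bind_pmf (bernoulli_pmf (ab/(1+ab))) (\<lambda>b. if b then map_pmf Suc (geo_pmf q (enat g) \<gamma>) else geo_pmf q (enat (Suc g)) \<gamma>)"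
proof (rule pmf_eqI)
  fix k :: nat
  have qp: "q^n \<le> 1" for n using q by (simp add: power_le_one)
  have w0: "0 \<le> (\<gamma>*q^(g-J) + ab)/(1+ab)" for J using q g ab by simp
  have w1: "(\<gamma>*q^(g-J) + ab)/(1+ab) \<le> 1" for J
  proof -
    have "\<gamma>*q^(g-J) \<le> 1" using g qp[of "g-J"] by (meson less_imp_le mult_le_one zero_le_power q(1))
    then show ?thesis using ab by simp
  qed
  have c: "0 \<le> ab/(1+ab)" "ab/(1+ab) \<le> 1" using ab by auto
  show "pmf (bind_pmf (geo_pmf q (enat g) \<gamma>) (\<lambda>J. map_pmf (\<lambda>b. J + of_bool b) (bernoulli_pmf ((\<gamma>*q^(g-J) + ab)/(1+ab))))) k
     = pmf (bind_pmf (bernoulli_pmf (ab/(1+ab))) (\<lambda>b. if b then map_pmf Suc (geo_pmf q (enat g) \<gamma>) else geo_pmf q (enat (Suc g)) \<gamma>)) k"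
    unfolding pmf_bind_step[OF w0 w1] pmf_bind_bern[OF c]
    using ab
    by (cases k) (simp_all add: pmf_map_Suc pmf_geo_fin[OF q g] A_full[OF q g] field_simps)
qed

lemma core0:
  assumes q: "0 < q" "q < 1" and g: "0 \<le> \<gamma>" "\<gamma> < 1" and ab: "0 < ab"
  shows "bind_pmf (geo_pmf q (enat g) \<gamma>) (\<lambda>J. map_pmf (\<lambda>b. J + of_bool b) (bernoulli_pmf (ab*(1 - q^(g-J))/(1+ab))))
     = bind_pmf (bernoulli_pmf ((1 - q^g)*ab/(1+ab))) (\<lambda>b. if b then map_pmf Suc (geo_pmf q (enat (g-1)) \<gamma>) else geo_pmf q (enat g) \<gamma>)"
proof (rule pmf_eqI)
  fix k :: nat
  have qp: "q^n \<le> 1" "0 \<le> q^n" for n using q by (simp_all add: power_le_one)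
  have w0: "0 \<le> ab*(1 - q^(g-J))/(1+ab)" for J using qp ab by simp
  have w1: "ab*(1 - q^(g-J))/(1+ab) \<le> 1" for J
  proof -
    have "ab*(1 - q^(g-J)) \<le> ab" using ab qp[of "g-J"] by (simp add: mult_left_le)
    then have "ab*(1 - q^(g-J)) \<le> 1 + ab" by linarith
    then show ?thesis using ab by (simp add: divide_le_eq)
  qed
  have c: "0 \<le> (1 - q^g)*ab/(1+ab)" "(1 - q^g)*ab/(1+ab) \<le> 1"
  proof -
    have "(1 - q^g)*ab \<le> ab" using ab qp[of g] by (simp add: mult_left_le_one_le)
    then have "(1 - q^g)*ab \<le> 1 + ab" by linarith
    then show "(1 - q^g)*ab/(1+ab) \<le> 1" using ab by (simp add: divide_le_eq)
    show "0 \<le> (1 - q^g)*ab/(1+ab)" using ab qp[of g] by simp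
  qed
  have B: "pgeo_fin q g \<gamma> k * q^(g-k) + (if 1 \<le> k then pgeo_fin q g \<gamma> (k-1) * (1 - q^(g-(k-1))) else 0)
     = (if 1 \<le> k then (1 - q^g) * pgeo_fin q (g-1) \<gamma> (k-1) else 0) + q^g * pgeo_fin q g \<gamma> k"
    by (rule B_full[OF q g])
  show "pmf (bind_pmf (geo_pmf q (enat g) \<gamma>) (\<lambda>J. map_pmf (\<lambda>b. J + of_bool b) (bernoulli_pmf (ab*(1 - q^(g-J))/(1+ab))))) k
     = pmf (bind_pmf (bernoulli_pmf ((1 - q^g)*ab/(1+ab))) (\<lambda>b. if b then map_pmf Suc (geo_pmf q (enat (g-1)) \<gamma>) else geo_pmf q (enat g) \<gamma>)) k"
    unfolding pmf_bind_step[OF w0 w1] pmf_bind_bern[OF c(1) c(2)]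
    using ab B
    apply (cases k)
     apply (simp_all add: pmf_map_Suc pmf_geo_fin[OF q g])
     apply (simp_all add: field_simps)
    apply (rule disjI2)
    apply (drule arg_cong[where f="\<lambda>x. ab*x + ab*(ab*x)"])
    apply (simp add: algebra_simps)
    done
qed



lemma Glen: "js \<in> set_pmf (Gjumps q a \<alpha> k prev xs) \<Longrightarrow> length js = length xs"
  by (induction xs arbitrary: js k prev) auto

lemma Blen: "bs \<in> set_pmf (Bjumps q a \<beta> k prev pj xs) \<Longrightarrow> length bs = length xs"
  by (induction xs arbitrary: bs k prev pj) auto

lemma Gnth: "n < length xs \<Longrightarrow> map_pmf (\<lambda>js. js ! n) (Gjumps q a \<alpha> k prev xs) =
   geo_pmf q (gap (if n = 0 then prev else Some (xs!(n-1))) (xs!n)) (a (k+n) * \<alpha>)"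
proof (induction xs arbitrary: n k prev)
  case Nil then show ?case by simp
next
  case (Cons x xs)
  show ?case
  proof (cases n)
    case 0
    then show ?thesis
      by (simp add: map_bind_pmf bind_return_pmf')
  next
    case (Suc n')
    then have "n' < length xs" using Cons by simp
    note IH = Cons.IH[OF this, of "Suc k" "Some x"]
    have "map_pmf (\<lambda>js. js ! n) (Gjumps q a \<alpha> k prev (x # xs)) =
       bind_pmf (geo_pmf q (gap prev x) (a k * \<alpha>)) (\<lambda>j. map_pmf (\<lambda>js. js ! n') (Gjumps q a \<alpha> (Suc k) (Some x) xs))"
      using Suc by (simp add: map_bind_pmf map_pmf_def[symmetric] map_pmf_comp)
    also have "\<dots> = map_pmf (\<lambda>js. js ! n') (Gjumps q a \<alpha> (Suc k) (Some x) xs)" by simp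
    finally show ?thesis using IH Suc by (cases n') auto
  qed
qed

lemma Bnth0: "map_pmf (\<lambda>bs. bs ! 0) (Bjumps q a \<beta> k prev pj (x # xs)) =
   bernoulli_pmf ((case prev of None \<Rightarrow> 1 | Some y \<Rightarrow> (if pj then 1 else 1 - q ^ nat (y - x - 1))) * (a k * \<beta> / (1 + a k * \<beta>)))"
  by (simp add: map_bind_pmf bind_return_pmf')

lemma Bpair: "Suc n < length xs \<Longrightarrow>
  map_pmf (\<lambda>bs. (bs ! n, bs ! Suc n)) (Bjumps q a \<beta> k prev pj xs) =
  bind_pmf (map_pmf (\<lambda>bs. bs ! n) (Bjumps q a \<beta> k prev pj xs))
    (\<lambda>b. map_pmf (\<lambda>c. (b, c)) (bernoulli_pmf ((if b then 1 else 1 - q ^ nat (xs!n - xs!Suc n - 1))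
          * (a (k + Suc n) * \<beta> / (1 + a (k + Suc n) * \<beta>)))))"
proof (induction xs arbitrary: n k prev pj)
  case Nil then show ?case by simp
next
  case (Cons x xs)
  show ?case
  proof (cases n)
    case 0
    then obtain x' xs' where xs: "xs = x' # xs'" using Cons by (cases xs) auto
    have nn: "(x # xs) ! n = x" "(x # xs) ! Suc n = x'" using 0 xs by auto
    show ?thesis unfolding nn unfolding 0 xs
      by (simp add: map_bind_pmf bind_return_pmf bind_assoc_pmf bind_map_pmf map_pmf_def nth_Cons_0 nth_Cons_Suc)
  next
    case (Suc n')
    then have "Suc n' < length xs" using Cons by simp
    note IH = Cons.IH[OF this]
    define B0 where "B0 = bernoulli_pmf ((case prev of None \<Rightarrow> 1 | Some y \<Rightarrow> (if pj then 1 else 1 - q ^ nat (y - x - 1))) * (a k * \<beta> / (1 + a k * \<beta>)))"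
    have e: "Bjumps q a \<beta> k prev pj (x # xs) = bind_pmf B0 (\<lambda>b. map_pmf (Cons b) (Bjumps q a \<beta> (Suc k) (Some x) b xs))"
      by (simp add: map_pmf_def B0_def)
    have nn: "(x # xs) ! n = xs ! n'" "(x # xs) ! Suc n = xs ! Suc n'" "k + Suc n = Suc k + Suc n'" using Suc by auto
    show ?thesis
      unfolding e nn map_bind_pmf map_pmf_comp bind_assoc_pmf bind_map_pmf
      using Suc by (simp add: IH bind_map_pmf)
  qed
qed



lemma Gpos:
  assumes "1 \<le> m" "m \<le> length xs"
  shows "map_pmf (\<lambda>ys. pos ys m) (Gmove q a \<alpha> xs) =
    map_pmf (\<lambda>j. xs!(m-1) + int j) (geo_pmf q (gap (epos xs (m-1)) (xs!(m-1))) (a m * \<alpha>))"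
proof -
  have "map_pmf (\<lambda>ys. pos ys m) (Gmove q a \<alpha> xs) =
     map_pmf (\<lambda>js. xs!(m-1) + int (js!(m-1))) (Gjumps q a \<alpha> 1 None xs)"
    unfolding Gmove_def map_pmf_comp
    by (rule map_pmf_cong) (use assms in \<open>auto simp: pos_def dest: Glen\<close>)
  also have "\<dots> = map_pmf (\<lambda>j. xs!(m-1) + int j) (map_pmf (\<lambda>js. js!(m-1)) (Gjumps q a \<alpha> 1 None xs))"
    by (simp add: map_pmf_comp)
  also have "\<dots> = map_pmf (\<lambda>j. xs!(m-1) + int j) (geo_pmf q (gap (epos xs (m-1)) (xs!(m-1))) (a m * \<alpha>))"
    using assms by (subst Gnth) (auto simp: epos_def)
  finally show ?thesis .
qed

lemma Gbind:
  assumes "1 \<le> m" "m \<le> length xs"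
  shows "bind_pmf (Gmove q a \<alpha> xs) (\<lambda>xs'. K (pos xs' m)) =
    bind_pmf (geo_pmf q (gap (epos xs (m-1)) (xs!(m-1))) (a m * \<alpha>)) (\<lambda>J. K (xs!(m-1) + int J))"
proof -
  have "bind_pmf (Gmove q a \<alpha> xs) (\<lambda>xs'. K (pos xs' m)) = bind_pmf (map_pmf (\<lambda>ys. pos ys m) (Gmove q a \<alpha> xs)) K"
    by (simp add: bind_map_pmf)
  then show ?thesis by (simp add: Gpos[OF assms] bind_map_pmf)
qed


lemma LW1: "Lweight q (-\<beta>) a \<nu> (enat r) 1 (enat r + enat 1 - enat 1) 1 = (\<nu>*q^r + a*\<beta>)/(1+a*\<beta>)"
  by (simp add: Lweight_def qpow_def)

lemma LW1s: "Lweight q (-\<beta>) a \<nu> (enat r) (Suc 0) (enat r) (Suc 0) = (\<nu>*q^r + a*\<beta>)/(1+a*\<beta>)"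
  by (simp add: Lweight_def qpow_def)

lemma LW0s: "J \<le> g \<Longrightarrow> Lweight q (-\<beta>) a \<nu> (enat (g - J)) 0 (enat (g - Suc J)) (Suc 0) = a*\<beta>*(1 - q^(g-J))/(1+a*\<beta>)"
proof (cases "J = g")
  case True then show ?thesis by (simp add: Lweight_def qpow_def)
next
  case False
  assume "J \<le> g"
  then have e: "g - J = Suc (g - Suc J)" using False by simp
  have e2: "enat (Suc r) = enat r + enat 1" for r by simp
  show ?thesis unfolding e e2 by (simp add: Lweight_def qpow_def)
qed

lemma LW0: "Lweight q (-\<beta>) a \<nu> (enat r) 0 (enat r + enat 0 - enat 1) 1 = a*\<beta>*(1 - q^r)/(1+a*\<beta>)"
  by (cases r) (simp_all add: Lweight_def qpow_def one_enat_def[symmetric] enat_0_iff)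

lemma LWinf: "Lweight q (-\<beta>) a \<nu> \<infinity> 0 (\<infinity> + enat 0 - enat 1) 1 = a*\<beta>/(1+a*\<beta>)"
  by (simp add: Lweight_def qpow_def)


lemma set_geo_fin: "0 < q \<Longrightarrow> q < 1 \<Longrightarrow> 0 \<le> \<gamma> \<Longrightarrow> \<gamma> < 1 \<Longrightarrow> J \<in> set_pmf (geo_pmf q (enat g) \<gamma>) \<Longrightarrow> J \<le> g"
proof (rule ccontr)
  assume a: "0 < q" "q < 1" "0 \<le> \<gamma>" "\<gamma> < 1" "J \<in> set_pmf (geo_pmf q (enat g) \<gamma>)" "\<not> J \<le> g"
  then have "pmf (geo_pmf q (enat g) \<gamma>) J = 0" by (simp add: pmf_geo_fin pgeo_fin_gt)
  with a(5) show False by (simp add: set_pmf_iff)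
qed

lemma fiber:
  assumes q: "0 < q" "q < 1" and g: "0 \<le> a * \<alpha>" "a * \<alpha> < 1" and ab: "0 < a * \<beta>"
    and X: "X = x + int g + 1" and Y: "Y = X + (if b1 then 1 else 0)"
  shows "bind_pmf (geo_pmf q (enat g) (a * \<alpha>)) (\<lambda>J. bind_pmf (bernoulli_pmf
        (Lweight q (-\<beta>) a (\<alpha>*a) (gap (Some X) (x + int J)) (nat (Y - X)) (gap (Some X) (x + int J) + enat (nat (Y - X)) - enat 1) 1))
        (\<lambda>b. return_pmf (Some Y, x + int J + (if b then 1 else 0))))
   = bind_pmf (bernoulli_pmf ((if b1 then 1 else 1 - q ^ nat (X - x - 1)) * (a * \<beta> / (1 + a * \<beta>))))
       (\<lambda>b2. bind_pmf (geo_pmf q (gap (Some Y) (x + (if b2 then 1 else 0))) (a * \<alpha>))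
          (\<lambda>J. return_pmf (Some Y, x + (if b2 then 1 else 0) + int J)))" (is "?L = ?R")
proof -
  define T where "T = (\<lambda>k::nat. (Some Y, x + int k))"
  define \<gamma> where "\<gamma> = a * \<alpha>"
  define ab where "ab = a * \<beta>"
  have gapJ: "J \<le> g \<Longrightarrow> gap (Some X) (x + int J) = enat (g - J)" for J
    using X by (simp add: gap_def nat_diff_distrib)
  have nX: "nat (X - x - 1) = g" using X by simp
  have Tb: "T (J + of_bool b) = (Some Y, x + int J + (if b then 1 else 0))" for J b
    by (cases b) (simp_all add: T_def)
  have Tb2: "T (of_bool b + J) = (Some Y, x + (if b then 1 else 0) + int J)" for J b
    by (cases b) (simp_all add: T_def)
  show ?thesis
  proof (cases b1)
    case True
    have j1: "nat (Y - X) = 1" using Y True by simp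
    have "?L = map_pmf T (bind_pmf (geo_pmf q (enat g) \<gamma>) (\<lambda>J. map_pmf (\<lambda>b. J + of_bool b) (bernoulli_pmf ((\<gamma>*q^(g-J) + ab)/(1+ab)))))"
      unfolding map_bind_pmf map_pmf_comp j1 \<gamma>_def ab_def
      apply (rule bind_pmf_cong[OF refl])
      subgoal for J
        using set_geo_fin[OF q g, of J g] by (simp add: gapJ LW1s map_pmf_def Tb algebra_simps)
      done
    also have "\<dots> = map_pmf T (bind_pmf (bernoulli_pmf (ab/(1+ab))) (\<lambda>b. if b then map_pmf Suc (geo_pmf q (enat g) \<gamma>) else geo_pmf q (enat (Suc g)) \<gamma>))"
      using core1[OF q g[folded \<gamma>_def] ab[folded ab_def]] \<gamma>_def by simp
    also have "\<dots> = ?R"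
      unfolding map_bind_pmf \<gamma>_def ab_def
      apply (simp only: True if_True mult_1)
      apply (rule bind_pmf_cong[OF refl])
      subgoal for b
        using X Y True by (cases b) (simp_all add: gap_def map_pmf_def map_pmf_comp T_def bind_return_pmf bind_assoc_pmf algebra_simps nat_add_distrib)
      done
    finally show ?thesis .
  next
    case False
    have j1: "nat (Y - X) = 0" using Y False by simp
    have "?L = map_pmf T (bind_pmf (geo_pmf q (enat g) \<gamma>) (\<lambda>J. map_pmf (\<lambda>b. J + of_bool b) (bernoulli_pmf (ab*(1 - q^(g-J))/(1+ab)))))"
      unfolding map_bind_pmf map_pmf_comp j1 \<gamma>_def ab_def
      apply (rule bind_pmf_cong[OF refl])
      subgoal for J
        using set_geo_fin[OF q g, of J g] by (simp add: gapJ LW0s map_pmf_def Tb algebra_simps)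
      done
    also have "\<dots> = map_pmf T (bind_pmf (bernoulli_pmf ((1 - q^g)*ab/(1+ab))) (\<lambda>b. if b then map_pmf Suc (geo_pmf q (enat (g-1)) \<gamma>) else geo_pmf q (enat g) \<gamma>))"
      using core0[OF q g[folded \<gamma>_def] ab[folded ab_def]] \<gamma>_def by simp
    also have "\<dots> = ?R"
      unfolding map_bind_pmf \<gamma>_def ab_def nX
      apply (simp only: False if_False)
      apply (rule bind_pmf_cong)
       apply (simp add: algebra_simps)
      subgoal for b
        using X Y False by (cases b) (simp_all add: gap_def map_pmf_def map_pmf_comp T_def bind_return_pmf bind_assoc_pmf algebra_simps nat_add_distrib nat_diff_distrib')
      done
    finally show ?thesis .
  qed
qed



theorem proposition5p10:
  fixes q \<alpha> \<beta> :: real and a :: "nat \<Rightarrow> real" and L m :: nat and xs :: "int list"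
  assumes "0 < q" "q < 1"
    and "L \<ge> 1"
    and "\<And>i. i \<in> {1..L} \<Longrightarrow> a i > 0"
    and "\<alpha> > 0" "\<beta> > 0"
    and "\<And>i. i \<in> {1..L} \<Longrightarrow> \<alpha> * a i < 1"
    and "config L xs"
    and "m \<in> {1..L}"
  shows "dagger_pair q a \<alpha> \<beta> xs m = BG_pair q a \<alpha> \<beta> xs m"
proof -
  have q: "0 < q" "q < 1" using assms(1,2) .
  from assms(9) have m1: "1 \<le> m" and mL: "m \<le> L" by auto
  have len: "length xs = L" and sw: "sorted_wrt (>) xs" using assms(8) by (auto simp: config_def)
  have am: "0 < a m" using assms(4) assms(9) by auto
  have g0: "0 \<le> a m * \<alpha>" using am assms(5) by simp
  have g1: "a m * \<alpha> < 1" using assms(7)[OF assms(9)] by (simp add: mult.commute)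
  have ab: "0 < a m * \<beta>" using am assms(6) by simp
  define Bj where "Bj = Bjumps q a \<beta> 1 None False xs"
  define F where "F = (\<lambda>bs. map2 (\<lambda>x b. x + (if b then 1 else 0)) xs bs)"
  have Bm: "Bmove q a \<beta> xs = map_pmf F Bj" unfolding Bmove_def Bj_def F_def ..
  have lenB: "\<And>bs. bs \<in> set_pmf Bj \<Longrightarrow> length bs = L" using Blen len unfolding Bj_def by metis
  have lenF: "\<And>bs. bs \<in> set_pmf Bj \<Longrightarrow> length (F bs) = L" by (simp add: F_def lenB len)
  have Fnth: "\<And>bs i. bs \<in> set_pmf Bj \<Longrightarrow> i < L \<Longrightarrow> F bs ! i = xs!i + (if bs!i then 1 else 0)"
    by (simp add: F_def lenB len)
  have Dform: "dagger_pair q a \<alpha> \<beta> xs m = bind_pmf Bj (\<lambda>bs.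
      bind_pmf (geo_pmf q (gap (epos xs (m-1)) (xs!(m-1))) (a m * \<alpha>)) (\<lambda>J.
       bind_pmf (bernoulli_pmf (Lweight q (-\<beta>) (a m) (\<alpha> * a m) (gap (epos xs (m-1)) (xs!(m-1) + int J))
          (case (epos (F bs) (m-1), epos xs (m-1)) of (Some y, Some x) \<Rightarrow> nat (y - x) | _ \<Rightarrow> 0)
          (gap (epos xs (m-1)) (xs!(m-1) + int J) + enat (case (epos (F bs) (m-1), epos xs (m-1)) of (Some y, Some x) \<Rightarrow> nat (y - x) | _ \<Rightarrow> 0) - enat 1) 1))
        (\<lambda>b. return_pmf (epos (F bs) (m-1), xs!(m-1) + int J + (if b then 1 else 0)))))"
    unfolding dagger_pair_def Bm bind_map_pmf Let_def
    by (subst Gbind[OF m1 mL[folded len]]) (rule refl)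
  have BGform: "BG_pair q a \<alpha> \<beta> xs m = bind_pmf Bj (\<lambda>bs.
      bind_pmf (geo_pmf q (gap (epos (F bs) (m-1)) (F bs!(m-1))) (a m * \<alpha>)) (\<lambda>J.
        return_pmf (epos (F bs) (m-1), F bs!(m-1) + int J)))"
    unfolding BG_pair_def Bm bind_map_pmf
    apply (rule bind_pmf_cong[OF refl])
    subgoal for bs using Gbind[OF m1, of "F bs"] lenF[of bs] mL by simp
    done
  show ?thesis
  proof (cases "m = 1")
    case True
    obtain x1 xs' where xs: "xs = x1 # xs'" using len assms(3) by (cases xs) auto
    define G where "G = geo_pmf q \<infinity> (a 1 * \<alpha>)"
    define c where "c = a 1 * \<beta> / (1 + a 1 * \<beta>)"
    have ep: "epos ys 0 = None" for ys by (simp add: epos_def)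
    have Lw: "Lweight q (-\<beta>) (a 1) (\<alpha> * a 1) \<infinity> 0 (\<infinity> + enat 0 - enat 1) 1 = c"
      unfolding c_def by (rule LWinf)
    have "dagger_pair q a \<alpha> \<beta> xs m = bind_pmf G (\<lambda>J. bind_pmf (bernoulli_pmf c) (\<lambda>b. return_pmf (None, x1 + int J + (if b then 1 else 0))))"
      unfolding Dform unfolding True ep G_def using Lw xs by (simp add: gap_def ep)
    also have "\<dots> = bind_pmf (bernoulli_pmf c) (\<lambda>b. bind_pmf G (\<lambda>J. return_pmf (None, x1 + (if b then 1 else 0) + int J)))"
      by (subst bind_commute_pmf) (simp add: algebra_simps)
    also have "\<dots> = bind_pmf (map_pmf (\<lambda>bs. bs ! 0) Bj) (\<lambda>b. bind_pmf G (\<lambda>J. return_pmf (None, x1 + (if b then 1 else 0) + int J)))"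
      unfolding Bj_def xs Bnth0 c_def by simp
    also have "\<dots> = BG_pair q a \<alpha> \<beta> xs m"
      unfolding BGform bind_map_pmf unfolding True ep G_def
      apply (rule bind_pmf_cong[OF refl])
      subgoal for bs using Fnth[of bs 0] assms(3) xs by (simp add: gap_def ep)
      done
    finally show ?thesis .
  next
    case False
    define i where "i = m - 2"
    have mi: "m = Suc (Suc i)" using False m1 i_def by simp
    have il: "Suc i < L" using mi mL by simp
    define X where "X = xs ! i"
    define x where "x = xs ! Suc i"
    have Xx: "X > x" unfolding X_def x_def using sorted_wrt_nth_less[OF sw, of i "Suc i"] il len by simp
    define g where "g = nat (X - x - 1)"
    have Xg: "X = x + int g + 1" using Xx g_def by simp
    have epx: "epos xs (m-1) = Some X" using mi by (simp add: epos_def X_def)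
    have xm: "xs ! (m-1) = x" using mi by (simp add: x_def)
    have epF: "bs \<in> set_pmf Bj \<Longrightarrow> epos (F bs) (m-1) = Some (X + (if bs ! i then 1 else 0))" for bs
      using mi Fnth[of bs i] il by (simp add: epos_def X_def)
    have Fm: "bs \<in> set_pmf Bj \<Longrightarrow> F bs ! (m-1) = x + (if bs ! Suc i then 1 else 0)" for bs
      using mi Fnth[of bs "Suc i"] il by (simp add: x_def)
    have gX: "gap (Some X) x = enat g" by (simp add: gap_def g_def)
    define Dg where "Dg = (\<lambda>b1. let Y = X + (if b1 then 1 else 0) in
       bind_pmf (geo_pmf q (enat g) (a m * \<alpha>)) (\<lambda>J. bind_pmf (bernoulli_pmf
        (Lweight q (-\<beta>) (a m) (\<alpha>*a m) (gap (Some X) (x + int J)) (nat (Y - X)) (gap (Some X) (x + int J) + enat (nat (Y - X)) - enat 1) 1))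
        (\<lambda>b. return_pmf (Some Y, x + int J + (if b then 1 else 0)))))"
    define Eg where "Eg = (\<lambda>b1 b2. let Y = X + (if b1 then 1 else 0) in
       bind_pmf (geo_pmf q (gap (Some Y) (x + (if b2 then 1 else 0))) (a m * \<alpha>))
          (\<lambda>J. return_pmf (Some Y, x + (if b2 then 1 else 0) + int J)))"
    define cB where "cB = (\<lambda>b1. (if b1 then 1 else 1 - q ^ nat (X - x - 1)) * (a m * \<beta> / (1 + a m * \<beta>)))"
    have "dagger_pair q a \<alpha> \<beta> xs m = bind_pmf Bj (\<lambda>bs. Dg (bs ! i))"
      unfolding Dform epx xm gX
      apply (rule bind_pmf_cong[OF refl])
      subgoal for bs using epF[of bs] by (simp add: Dg_def Let_def)
      done
    also have "\<dots> = bind_pmf (map_pmf (\<lambda>bs. bs ! i) Bj) Dg" by (simp add: bind_map_pmf)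
    also have "\<dots> = bind_pmf (map_pmf (\<lambda>bs. bs ! i) Bj) (\<lambda>b1. bind_pmf (bernoulli_pmf (cB b1)) (Eg b1))"
      apply (rule bind_pmf_cong[OF refl])
      subgoal for b1
        unfolding Dg_def Eg_def cB_def Let_def
        by (rule fiber[OF q g0 g1 ab Xg refl])
      done
    also have "\<dots> = bind_pmf (map_pmf (\<lambda>bs. (bs ! i, bs ! Suc i)) Bj) (\<lambda>(b1, b2). Eg b1 b2)"
      unfolding Bj_def using Bpair[of i xs q a \<beta> 1 None False, folded X_def x_def] il len mi
      by (simp add: bind_assoc_pmf bind_map_pmf cB_def map_pmf_def bind_return_pmf)
    also have "\<dots> = bind_pmf Bj (\<lambda>bs. Eg (bs ! i) (bs ! Suc i))" by (simp add: bind_map_pmf)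
    also have "\<dots> = BG_pair q a \<alpha> \<beta> xs m"
      unfolding BGform
      apply (rule bind_pmf_cong[OF refl])
      subgoal for bs using epF[of bs] Fm[of bs] by (simp add: Eg_def Let_def)
      done
    finally show ?thesis .
  qed
qed


end
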